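(* Let $\vec r_1,\vec r_2$ be in the closed unit ball of $\mathbb{R}^3$, both orthogonal to $(0,0,1)$, with $r_i=|\vec r_i|$. Then for every $p\ge1$, $$D^p_{z,p}(\rho(\vec r_1),\rho(\vec r_2))=2^{p-1}\Big(1-\sqrt{1-\max(r_1^2,r_2^2)}\Big).$$ In particular, if $r_1\ge r_2$, then $D^p_{z,p}(\rho(\vec r_1),\rho(\vec r_2))=D^p_{z,p}(\rho(\vec r_2),\rho(\vec r_1))=D^p_{z,p}(\rho(\vec r_1),\rho(\vec r_1))$.
   Context: Qubit setting: $\mathcal{H}=\mathbb{C}^2$, $\mathcal{H}^*$ is identified with $\mathbb{C}^2$ via the dual basis, and $A^T$ is the usual matrix transpose; operators on $\mathcal{H}\otimes\mathcal{H}^*$ are $4\times4$ matrices in the basis $e_1\otimes e_1^*,e_1\otimes e_2^*,e_2\otimes e_1^*,e_2\otimes e_2^*$. $\sigma_x=\begin{pmatrix}0&1\\1&0\end{pmatrix}$, $\sigma_y=\begin{pmatrix}0&-i\\i&0\end{pmatrix}$, $\sigma_z=\begin{pmatrix}1&0\\0&-1\end{pmatrix}$, $\vec\sigma=(\sigma_x,\sigma_y,\sigma_z)$, and $\rho(\vec r)=\tfrac12(I+\vec r\cdot\vec\sigma)$ for $|\vec r|\le1$. The set of couplings of states $\rho,\omega$ is $\mathcal{C}(\rho,\omega)=\{\Pi\in\mathcal{S}(\mathcal{H}\otimes\mathcal{H}^* ):\mathrm{tr}_{\mathcal{H}^*}[\Pi]=\omega,\ \mathrm{tr}_{\mathcal{H}}[\Pi]=\rho^T\}$.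 For $p\ge1$, $C_{z,p}=|\sigma_z\otimes I^T-I\otimes\sigma_z^T|^p=\mathrm{diag}(0,2^p,2^p,0)$, and $D_{z,p}(\rho,\omega)=\big(\min_{\Pi\in\mathcal{C}(\rho,\omega)}\mathrm{tr}[\Pi C_{z,p}]\big)^{1/p}$. *)

theory Defs
  imports "HOL-Analysis.Analysis"
begin

text \<open>Operators on H \<otimes> H* are
  matrices indexed by pairs (i,j), standing for e_i \<otimes> e_j^*; the basis order
  (1,1),(1,2),(2,1),(2,2) of the paper is the lexicographic order on pairs.\<close>

type_synonym qop = "complex^2^2"
type_synonym qop2 = "complex^(2 \<times> 2)^(2 \<times> 2)"

definition sigma_x :: qop where
  "sigma_x = (\<chi> i j. if i = j then 0 else 1)"

definition sigma_y :: qop where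
  "sigma_y = (\<chi> i j. if i = 1 \<and> j = 2 then - \<i> else if i = 2 \<and> j = 1 then \<i> else 0)"

definition sigma_z :: qop where
  "sigma_z = (\<chi> i j. if i = j then (if i = 1 then 1 else -1) else 0)"

definition smat :: "complex \<Rightarrow> complex^'n^'m \<Rightarrow> complex^'n^'m" where
  "smat c A = (\<chi> i j. c * A$i$j)"

definition bloch :: "real^3 \<Rightarrow> qop" where
  "bloch r = smat (1/2) (mat 1 + smat (complex_of_real (r$1)) sigma_x
                               + smat (complex_of_real (r$2)) sigma_y
                               + smat (complex_of_real (r$3)) sigma_z)"

definition psd :: "complex^'n^'n \<Rightarrow> bool" where
  "psd A \<longleftrightarrow> (\<forall>i j. A$i$j = cnj (A$j$i)) \<and>
     (\<forall>v :: 'n \<Rightarrow> complex. Re (\<Sum>i\<in>UNIV. \<Sum>j\<in>UNIV. cnj (v i) * A$i$j * v j) \<ge> 0)"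

definition is_state :: "complex^'n^'n \<Rightarrow> bool" where
  "is_state A \<longleftrightarrow> psd A \<and> trace A = 1"

definition ptrace_dual :: "complex^('a::finite \<times> 'b::finite)^('a \<times> 'b) \<Rightarrow> complex^'a^'a" where
  "ptrace_dual P = (\<chi> i k. \<Sum>j\<in>UNIV. P$(i,j)$(k,j))"

definition ptrace_H :: "complex^('a::finite \<times> 'b::finite)^('a \<times> 'b) \<Rightarrow> complex^'b^'b" where
  "ptrace_H P = (\<chi> j l. \<Sum>i\<in>UNIV. P$(i,j)$(i,l))"

definition couplings :: "qop \<Rightarrow> qop \<Rightarrow> qop2 set" where
  "couplings \<rho> \<omega> = {P. is_state P \<and> ptrace_dual P = \<omega> \<and> ptrace_H P = transpose \<rho>}"

text \<open>C_{z,p} = |sigma_z \<otimes> I^T - I \<otimes> sigma_z^T|^p. The operator inside the absolute value is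
  diagonal in the product basis with entry sigma_z(i,i) - sigma_z(j,j) at (i,j), so its
  p-th absolute power is the diagonal matrix with entries |sigma_z(i,i) - sigma_z(j,j)|^p,
  i.e. diag(0, 2^p, 2^p, 0).\<close>
definition Cz :: "real \<Rightarrow> qop2" where
  "Cz p = (\<chi> a b. if a = b then
             complex_of_real (cmod (sigma_z$fst a$fst a - sigma_z$snd a$snd a) powr p)
           else 0)"

text \<open>D_{z,p}(rho, omega) = (min over couplings of tr[Pi C_{z,p}])^(1/p);
  the minimum is written as an infimum (it is attained).\<close>
definition Dz :: "real \<Rightarrow> qop \<Rightarrow> qop \<Rightarrow> real" where
  "Dz p \<rho> \<omega> = (Inf {Re (trace (P ** Cz p)) | P. P \<in> couplings \<rho> \<omega>}) powr (1 / p)"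

end

theory Submission
  imports Defs
begin


lemma sum_22: "sum f (UNIV::(2\<times>2) set) = f (1,1) + f (1,2) + f (2,1) + f (2,2)"
proof -
  have "sum f (UNIV::(2\<times>2) set) = (\<Sum>i\<in>(UNIV::2 set). \<Sum>j\<in>(UNIV::2 set). f (i,j))"
    by (simp add: sum.cartesian_product flip: UNIV_Times_UNIV)
  then show ?thesis by (simp add: sum_2 algebra_simps)
qed

lemma bloch_entries:
  "bloch r $ 1 $ 1 = (1 + r$3)/2"
  "bloch r $ 2 $ 2 = (1 - r$3)/2"
  "bloch r $ 1 $ 2 = (r$1 - \<i> * r$2)/2"
  "bloch r $ 2 $ 1 = (r$1 + \<i> * r$2)/2"
  by (simp_all add: bloch_def smat_def sigma_x_def sigma_y_def sigma_z_def mat_def field_simps)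

lemma psd_two:
  fixes P :: "complex^'n^'n"
  assumes "psd P" "a \<noteq> b"
  shows "Re (cnj c * P$a$a * c + cnj c * P$a$b * d + cnj d * P$b$a * c + cnj d * P$b$b * d) \<ge> 0"
proof -
  define v where "v = (\<lambda>i. (if i = a then c else 0) + (if i = b then d else 0))"
  have "0 \<le> Re (\<Sum>i\<in>UNIV. \<Sum>j\<in>UNIV. cnj (v i) * P$i$j * v j)"
    using assms(1) unfolding psd_def by blast
  also have "(\<Sum>i\<in>UNIV. \<Sum>j\<in>UNIV. cnj (v i) * P$i$j * v j) =
     cnj c * P$a$a * c + cnj c * P$a$b * d + cnj d * P$b$a * c + cnj d * P$b$b * d"
  proof -
    have e: "\<And>i j. cnj (v i) * P$i$j * v j =
       (if i = a then cnj c else 0) * P$i$j * (if j = a then c else 0) +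
       (if i = a then cnj c else 0) * P$i$j * (if j = b then d else 0) +
       (if i = b then cnj d else 0) * P$i$j * (if j = a then c else 0) +
       (if i = b then cnj d else 0) * P$i$j * (if j = b then d else 0)"
      by (simp add: v_def algebra_simps)
    show ?thesis unfolding e sum.distrib
      by (simp add: if_distrib[where f="\<lambda>x. x * _"] if_distrib[where f="\<lambda>x. _ * x"] sum.delta sum.delta' cong: if_cong)
  qed
  finally show ?thesis .
qed

lemma key_bound:
  fixes P :: "complex^'n^'n" and t :: real and c :: complex
  assumes "psd P" "i1 \<noteq> i2" "i3 \<noteq> i4"
    and d1: "P$i1$i1 = of_real (1/2 - t)" and d2: "P$i2$i2 = of_real t"
    and d3: "P$i3$i3 = of_real t" and d4: "P$i4$i4 = of_real (1/2 - t)"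
    and off: "P$i1$i2 + P$i3$i4 = c/2"
  shows "(1-2*t) * (cmod c)^2 * (8*t*(1-2*t) - (cmod c)^2) \<ge> 0"
proof -
  define n where "n = (cmod c)^2"
  define l where "l = 2*(1-2*t)"
  define e where "e = of_real l * cnj c"
  define s where "s = (of_real n :: complex)"
  define al where "al = P$i1$i2"
  have herm: "\<And>i j. P$i$j = cnj (P$j$i)" using assms(1) unfolding psd_def by blast
  have h1: "Re (cnj s * P$i1$i1 * s + cnj s * P$i1$i2 * (-e) + cnj (-e) * P$i2$i1 * s + cnj (-e) * P$i2$i2 * (-e)) \<ge> 0"
    by (rule psd_two[OF assms(1,2)])
  have h2: "Re (cnj (-cnj e) * P$i3$i3 * (-cnj e) + cnj (-cnj e) * P$i3$i4 * s + cnj s * P$i4$i3 * (-cnj e) + cnj s * P$i4$i4 * s) \<ge> 0"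
    by (rule psd_two[OF assms(1,3)])
  have cc: "cnj c * c = of_real n" unfolding n_def by (metis complex_norm_square mult.commute)
  have be: "P$i3$i4 = c/2 - al" using off al_def by (simp add: algebra_simps)
  have "(cnj s * P$i1$i1 * s + cnj s * P$i1$i2 * (-e) + cnj (-e) * P$i2$i1 * s + cnj (-e) * P$i2$i2 * (-e))
     + (cnj (-cnj e) * P$i3$i3 * (-cnj e) + cnj (-cnj e) * P$i3$i4 * s + cnj s * P$i4$i3 * (-cnj e) + cnj s * P$i4$i4 * s)
     = of_real ((1-2*t) * n * (8*t*(1-2*t) - n))"
  proof -
    have q1: "P$i2$i1 = cnj al" "P$i4$i3 = cnj c/2 - cnj al" using herm[of i2 i1] herm[of i4 i3] be al_def by simp_all
    show ?thesis
      unfolding d1 d2 d3 d4 be al_def[symmetric] e_def s_def l_def q1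
      apply (simp add: algebra_simps)
      using cc by (simp add: mult.assoc[symmetric] mult.commute[of c "cnj c"])
  qed
  then have "Re (of_real ((1-2*t) * n * (8*t*(1-2*t) - n))) \<ge> 0"
    using h1 h2 by (metis plus_complex.sel(1) add_nonneg_nonneg)
  then show ?thesis by (simp add: n_def)
qed



lemma psd_gram2:
  fixes w1 w2 :: "'n::finite \<Rightarrow> complex"
  shows "psd ((\<chi> a b. (w1 a * cnj (w1 b) + w2 a * cnj (w2 b)) / 2) :: complex^'n^'n)"
  unfolding psd_def
proof (intro conjI allI)
  fix i j show "(\<chi> a b. (w1 a * cnj (w1 b) + w2 a * cnj (w2 b)) / 2) $ i $ j =
        cnj ((\<chi> a b. (w1 a * cnj (w1 b) + w2 a * cnj (w2 b)) / 2) $ j $ i :: complex)"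
    by (simp add: mult.commute)
next
  fix v :: "'n \<Rightarrow> complex"
  define z1 where "z1 = (\<Sum>i\<in>UNIV. cnj (v i) * w1 i)"
  define z2 where "z2 = (\<Sum>i\<in>UNIV. cnj (v i) * w2 i)"
  have cz1: "cnj z1 = (\<Sum>j\<in>UNIV. cnj (w1 j) * v j)" unfolding z1_def by (simp add: mult.commute)
  have cz2: "cnj z2 = (\<Sum>j\<in>UNIV. cnj (w2 j) * v j)" unfolding z2_def by (simp add: mult.commute)
  have "(\<Sum>i\<in>UNIV. \<Sum>j\<in>UNIV. cnj (v i) * (\<chi> a b. (w1 a * cnj (w1 b) + w2 a * cnj (w2 b)) / 2) $ i $ j * v j)
      = (\<Sum>i\<in>UNIV. \<Sum>j\<in>UNIV. (cnj (v i) * w1 i) * (cnj (w1 j) * v j) / 2 + (cnj (v i) * w2 i) * (cnj (w2 j) * v j) / 2)"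
    by (intro sum.cong refl) (simp add: algebra_simps add_divide_distrib)
  also have "\<dots> = (z1 * cnj z1 + z2 * cnj z2) / 2"
  proof -
    have a: "z1 * cnj z1 = (\<Sum>i\<in>UNIV. \<Sum>j\<in>UNIV. (cnj (v i) * w1 i) * (cnj (w1 j) * v j))"
      unfolding cz1 unfolding z1_def sum_product ..
    have b: "z2 * cnj z2 = (\<Sum>i\<in>UNIV. \<Sum>j\<in>UNIV. (cnj (v i) * w2 i) * (cnj (w2 j) * v j))"
      unfolding cz2 unfolding z2_def sum_product ..
    show ?thesis unfolding a b by (simp add: sum.distrib sum_divide_distrib add_divide_distrib)
  qed
  also have "\<dots> = of_real (((cmod z1)^2 + (cmod z2)^2)/2)"
    by (simp flip: complex_norm_square)
  finally have E: "(\<Sum>i\<in>UNIV. \<Sum>j\<in>UNIV. cnj (v i) * (\<chi> a b. (w1 a * cnj (w1 b) + w2 a * cnj (w2 b)) / 2) $ i $ j * v j)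
     = of_real (((cmod z1)^2 + (cmod z2)^2)/2)" .
  show "0 \<le> Re (\<Sum>i\<in>UNIV. \<Sum>j\<in>UNIV. cnj (v i) * (\<chi> a b. (w1 a * cnj (w1 b) + w2 a * cnj (w2 b)) / 2) $ i $ j * v j)"
    unfolding E Re_complex_of_real by simp
qed

definition wv :: "real \<Rightarrow> real \<Rightarrow> complex \<Rightarrow> complex \<Rightarrow> 2\<times>2 \<Rightarrow> complex" where
  "wv s q u1 u2 = (\<lambda>(i,j). if i = 1 then (if j = 1 then of_real s else of_real q * u1)
                         else (if j = 1 then of_real q * u2 else of_real s * u1 * u2))"

definition PP :: "real \<Rightarrow> real \<Rightarrow> complex \<Rightarrow> complex \<Rightarrow> complex \<Rightarrow> complex \<Rightarrow> qop2" where
  "PP s q u1 u2 u1' u2' = (\<chi> a b. (wv s q u1 u2 a * cnj (wv s q u1 u2 b) + wv s q u1' u2' a * cnj (wv s q u1' u2' b)) / 2)"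



lemma unit_cnj: "cmod u = 1 \<Longrightarrow> u * cnj u = 1"
proof -
  assume a: "cmod u = 1"
  have "u * cnj u = of_real ((cmod u)^2)" by (rule complex_norm_square[symmetric])
  also have "\<dots> = 1" using a by simp
  finally show ?thesis .
qed

lemma PP_props:
  assumes u: "cmod u1 = 1" "cmod u2 = 1" "cmod u1' = 1" "cmod u2' = 1"
    and sq: "s^2 + q^2 = 1/2"
  shows "is_state (PP s q u1 u2 u1' u2')"
    and "ptrace_dual (PP s q u1 u2 u1' u2') = (\<chi> i k. if i = k then 1/2 else if i = 1 then
           of_real (s*q) * (cnj u2 + cnj u2') else of_real (s*q) * (u2 + u2'))"
    and "ptrace_H (PP s q u1 u2 u1' u2') = (\<chi> i k. if i = k then 1/2 else if i = 1 then
           of_real (s*q) * (cnj u1 + cnj u1') else of_real (s*q) * (u1 + u1'))"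
    and "Re (trace (PP s q u1 u2 u1' u2' ** Cz p)) = 2 powr p * (2 * q^2)"
proof -
  have un: "u1 * cnj u1 = 1" "u2 * cnj u2 = 1" "u1' * cnj u1' = 1" "u2' * cnj u2' = 1"
    using u unit_cnj by blast+
  have h: "s * s + q * q = 1 / 2" using sq by (simp add: power2_eq_square)
  have sqc: "of_real s * of_real s + of_real q * of_real q = (1/2 :: complex)"
  proof -
    have "of_real s * of_real s + of_real q * of_real q = complex_of_real (s * s + q * q)" by simp
    also have "\<dots> = complex_of_real (1/2)" by (simp only: h)
    also have "\<dots> = 1/2" by simp
    finally show ?thesis .
  qed
  show "is_state (PP s q u1 u2 u1' u2')"
    unfolding is_state_def
  proof
    show "psd (PP s q u1 u2 u1' u2')" unfolding PP_def by (rule psd_gram2[of "wv s q u1 u2" "wv s q u1' u2'"])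
    show "trace (PP s q u1 u2 u1' u2') = 1"
      unfolding trace_def PP_def sum_22 wv_def
      using un sqc by simp algebra
  qed
  show "ptrace_dual (PP s q u1 u2 u1' u2') = (\<chi> i k. if i = k then 1/2 else if i = 1 then
           of_real (s*q) * (cnj u2 + cnj u2') else of_real (s*q) * (u2 + u2'))"
    unfolding ptrace_dual_def vec_eq_iff forall_2 PP_def sum_2 wv_def
    using un sqc by simp algebra
  show "ptrace_H (PP s q u1 u2 u1' u2') = (\<chi> i k. if i = k then 1/2 else if i = 1 then
           of_real (s*q) * (cnj u1 + cnj u1') else of_real (s*q) * (u1 + u1'))"
    unfolding ptrace_H_def vec_eq_iff forall_2 PP_def sum_2 wv_def
    using un sqc by simp algebra
  show "Re (trace (PP s q u1 u2 u1' u2' ** Cz p)) = 2 powr p * (2 * q^2)"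
  proof -
    have re: "Re u1 ^2 + Im u1 ^2 = 1" "Re u2 ^2 + Im u2 ^2 = 1" "Re u1' ^2 + Im u1' ^2 = 1" "Re u2' ^2 + Im u2' ^2 = 1"
      using u by (simp_all flip: cmod_power2)
    show ?thesis
      unfolding trace_def matrix_matrix_mult_def Cz_def PP_def sum_22 wv_def sigma_z_def
      using re by simp algebra
  qed
qed



lemma unit_split:
  assumes "cmod c \<le> 1"
  shows "\<exists>u u'. cmod u = 1 \<and> cmod u' = 1 \<and> u + u' = 2 * c"
proof (cases "c = 0")
  case True
  then show ?thesis by (intro exI[of _ 1] exI[of _ "-1"]) simp
next
  case False
  define k where "k = sqrt (1 / (cmod c)^2 - 1)"
  have cpos: "cmod c > 0" using False by simp
  have k2: "k^2 = 1 / (cmod c)^2 - 1"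
    unfolding k_def using assms cpos by (simp add: field_simps power_le_one)
  have n: "cmod (1 + \<i> * of_real k) = sqrt (1 + k^2)" "cmod (1 - \<i> * of_real k) = sqrt (1 + k^2)"
    by (simp_all add: cmod_def power2_eq_square)
  have "cmod c * sqrt (1 + k^2) = 1"
  proof -
    have "cmod c * sqrt (1 + k^2) = sqrt ((cmod c)^2 * (1 + k^2))"
      by (simp add: real_sqrt_mult)
    also have "(cmod c)^2 * (1 + k^2) = 1" using cpos unfolding k2 by (simp add: field_simps)
    finally show ?thesis by simp
  qed
  then have "cmod (c * (1 + \<i> * of_real k)) = 1" "cmod (c * (1 - \<i> * of_real k)) = 1"
    by (simp_all only: norm_mult n)
  moreover have "c * (1 + \<i> * of_real k) + c * (1 - \<i> * of_real k) = 2 * c"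
    by (simp add: algebra_simps)
  ultimately show ?thesis by blast
qed

lemma norm3: "(norm (r::real^3))^2 = r$1^2 + r$2^2 + r$3^2"
  by (simp add: norm_vec_def L2_set_def sum_3)

lemma inner3: "r \<bullet> vector [0, 0, 1] = (r::real^3)$3"
  by (simp add: inner_vec_def sum_3)

lemma t_bound:
  fixes t n :: real
  assumes "0 \<le> t" "0 \<le> n" "n \<le> 1" "(1-2*t) * n * (8*t*(1-2*t) - n) \<ge> 0"
  shows "(1 - sqrt (1 - n))/4 \<le> t"
proof (cases "1 - 4*t \<le> 0")
  case True
  have "sqrt (1 - n) \<ge> 0" using assms by simp
  then have "(1 - sqrt (1 - n))/4 \<le> 1/4" by (simp add: divide_right_mono)
  then show ?thesis using True by linarith
next
  case False
  show ?thesis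
  proof (cases "n = 0")
    case True then show ?thesis using assms by simp
  next
    case n0: False
    have "1 - 2*t > 0" using False assms by linarith
    then have "(1-2*t) * n > 0" using n0 assms by simp
    then have "8*t*(1-2*t) - n \<ge> 0" using assms(4) by (simp add: zero_le_mult_iff)
    then have "(1 - 4*t)^2 \<le> 1 - n" by (simp add: power2_eq_square algebra_simps)
    then have "1 - 4*t \<le> sqrt (1 - n)" using False by (simp add: real_le_rsqrt)
    then show ?thesis by simp
  qed
qed



lemma real_diag:
  assumes "psd P" shows "P$a$a = of_real (Re (P$a$a))"
proof -
  have "P$a$a = cnj (P$a$a)" using assms unfolding psd_def by blast
  then have "Im (P$a$a) = 0" by (metis cnj.sel(2) neg_equal_zero)
  then show ?thesis by (simp add: complex_eq_iff)
qed

lemma diag_nonneg: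
  fixes P :: "qop2"
  assumes "psd P" shows "Re (P$a$a) \<ge> 0"
proof -
  define b :: "2\<times>2" where "b = (if a = (1,1) then (1,2) else (1,1))"
  have "b \<noteq> a" unfolding b_def by auto
  from psd_two[OF assms, of a b 1 0] `b \<noteq> a` show ?thesis by simp
qed

lemma lower:
  fixes r1 r2 :: "real^3"
  assumes z: "r1$3 = 0" "r2$3 = 0" and nr: "norm r1 \<le> 1" "norm r2 \<le> 1"
    and P: "P \<in> couplings (bloch r1) (bloch r2)"
  shows "2 powr (p-1) * (1 - sqrt (1 - max ((norm r1)\<^sup>2) ((norm r2)\<^sup>2))) \<le> Re (trace (P ** Cz p))"
proof -
  have psd: "psd P" and pd: "ptrace_dual P = bloch r2" and pH: "ptrace_H P = transpose (bloch r1)"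
    using P unfolding couplings_def is_state_def by auto
  have e1: "P$(1,1)$(1,1) + P$(1,2)$(1,2) = 1/2"
    using arg_cong[OF pd, of "\<lambda>M. M$1$1"] z unfolding ptrace_dual_def by (simp add: sum_2 bloch_entries)
  have e2: "P$(2,1)$(2,1) + P$(2,2)$(2,2) = 1/2"
    using arg_cong[OF pd, of "\<lambda>M. M$2$2"] z unfolding ptrace_dual_def by (simp add: sum_2 bloch_entries)
  have e3: "P$(1,1)$(1,1) + P$(2,1)$(2,1) = 1/2"
    using arg_cong[OF pH, of "\<lambda>M. M$1$1"] z unfolding ptrace_H_def by (simp add: sum_2 bloch_entries transpose_def)
  have e4: "P$(1,2)$(1,2) + P$(2,2)$(2,2) = 1/2"
    using arg_cong[OF pH, of "\<lambda>M. M$2$2"] z unfolding ptrace_H_def by (simp add: sum_2 bloch_entries transpose_def)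
  have o1: "P$(1,1)$(2,1) + P$(1,2)$(2,2) = (of_real (r2$1) - \<i> * of_real (r2$2)) / 2"
    using arg_cong[OF pd, of "\<lambda>M. M$1$2"] unfolding ptrace_dual_def by (simp add: sum_2 bloch_entries)
  have o2: "P$(1,1)$(1,2) + P$(2,1)$(2,2) = (of_real (r1$1) + \<i> * of_real (r1$2)) / 2"
    using arg_cong[OF pH, of "\<lambda>M. M$1$2"] unfolding ptrace_H_def by (simp add: sum_2 bloch_entries transpose_def)
  define t where "t = Re (P$(1,2)$(1,2))"
  have d12: "P$(1,2)$(1,2) = of_real t" using real_diag[OF psd, of "(1,2)"] by (simp only: t_def[symmetric])
  have d21: "P$(2,1)$(2,1) = of_real t"
  proof -
    have "P$(2,1)$(2,1) = P$(1,2)$(1,2)" using e1 e3 by algebra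
    then show ?thesis using d12 by simp
  qed
  have d11: "P$(1,1)$(1,1) = of_real (1/2 - t)"
  proof -
    have "P$(1,1)$(1,1) = 1/2 - P$(1,2)$(1,2)" using e1 by algebra
    then show ?thesis using d12 by simp
  qed
  have d22: "P$(2,2)$(2,2) = of_real (1/2 - t)"
  proof -
    have "P$(2,2)$(2,2) = 1/2 - P$(1,2)$(1,2)" using e4 by algebra
    then show ?thesis using d12 by simp
  qed
  have t0: "0 \<le> t" using diag_nonneg[OF psd, of "(1,2)"] t_def by simp
  have kb1: "(1-2*t) * (cmod (of_real (r2$1) - \<i> * of_real (r2$2)))^2 * (8*t*(1-2*t) - (cmod (of_real (r2$1) - \<i> * of_real (r2$2)))^2) \<ge> 0"
    by (rule key_bound[OF psd _ _ d11 _ _ d22 o1]) (simp_all add: d21 d12)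
  have kb2: "(1-2*t) * (cmod (of_real (r1$1) + \<i> * of_real (r1$2)))^2 * (8*t*(1-2*t) - (cmod (of_real (r1$1) + \<i> * of_real (r1$2)))^2) \<ge> 0"
    by (rule key_bound[OF psd _ _ d11 _ _ d22 o2]) (simp_all add: d21 d12)
  have c1: "(cmod (of_real (r1$1) + \<i> * of_real (r1$2)))^2 = (norm r1)^2"
    using z by (simp add: norm3 cmod_power2)
  have c2: "(cmod (of_real (r2$1) - \<i> * of_real (r2$2)))^2 = (norm r2)^2"
    using z by (simp add: norm3 cmod_power2)
  have n1: "(norm r1)^2 \<le> 1" "(norm r2)^2 \<le> 1" using nr by (simp_all add: power_le_one)
  have b1: "(1 - sqrt (1 - (norm r1)^2))/4 \<le> t"
    by (rule t_bound[OF t0 _ n1(1)]) (use kb2[unfolded c1] in simp_all)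
  have b2: "(1 - sqrt (1 - (norm r2)^2))/4 \<le> t"
    by (rule t_bound[OF t0 _ n1(2)]) (use kb1[unfolded c2] in simp_all)
  have bt: "(1 - sqrt (1 - max ((norm r1)\<^sup>2) ((norm r2)\<^sup>2)))/4 \<le> t"
    using b1 b2 by (cases "(norm r1)^2 \<le> (norm r2)^2") (simp_all add: max_def)
  have cost: "Re (trace (P ** Cz p)) = 2 powr p * (2 * t)"
    unfolding trace_def matrix_matrix_mult_def Cz_def sum_22 sigma_z_def
    using d12 d21 by simp
  have "2 powr (p-1) * (1 - sqrt (1 - max ((norm r1)\<^sup>2) ((norm r2)\<^sup>2)))
        = 2 powr p * 2 * ((1 - sqrt (1 - max ((norm r1)\<^sup>2) ((norm r2)\<^sup>2)))/4)"
    by (simp add: powr_diff)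
  also have "\<dots> \<le> 2 powr p * 2 * t" using bt by (intro mult_left_mono) simp_all
  finally show ?thesis using cost by simp
qed



lemma upper:
  fixes r1 r2 :: "real^3"
  assumes z: "r1$3 = 0" "r2$3 = 0" and nr: "norm r1 \<le> 1" "norm r2 \<le> 1"
  shows "\<exists>P \<in> couplings (bloch r1) (bloch r2).
           Re (trace (P ** Cz p)) = 2 powr (p-1) * (1 - sqrt (1 - max ((norm r1)\<^sup>2) ((norm r2)\<^sup>2)))"
proof -
  define M where "M = max ((norm r1)\<^sup>2) ((norm r2)\<^sup>2)"
  have n1: "(norm r1)^2 \<le> 1" "(norm r2)^2 \<le> 1" using nr by (simp_all add: power_le_one)
  have M01: "0 \<le> M" "M \<le> 1" using n1 unfolding M_def by (auto simp: max_def)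
  define r where "r = sqrt (1 - M)"
  have r01: "0 \<le> r" "r \<le> 1" "r^2 = 1 - M" using M01 unfolding r_def by auto
  define t where "t = (1 - r)/4"
  have t0: "0 \<le> t" "t \<le> 1/2" using r01 unfolding t_def by auto
  define s where "s = sqrt (1/2 - t)"
  define q where "q = sqrt t"
  have s2: "s^2 = 1/2 - t" using t0 unfolding s_def by simp
  have q2: "q^2 = t" using t0 unfolding q_def by simp
  have sq0: "0 \<le> s" "0 \<le> q" unfolding s_def q_def using t0 by auto
  have sq: "s^2 + q^2 = 1/2" using s2 q2 by simp
  define k where "k = 4 * s * q"
  have k0: "0 \<le> k" unfolding k_def using sq0 by simp
  have k2: "k^2 = M"
  proof -
    have "k^2 = 16 * s^2 * q^2" unfolding k_def by (simp add: power_mult_distrib)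
    also have "\<dots> = 16 * (1/2 - t) * t" using s2 q2 by simp
    also have "\<dots> = 1 - r^2" unfolding t_def by (simp add: power2_eq_square field_simps)
    finally show ?thesis using r01 by simp
  qed
  define z1 where "z1 = of_real (r1$1) - \<i> * of_real (r1$2)"
  define z2 where "z2 = of_real (r2$1) + \<i> * of_real (r2$2)"
  have cz1: "(cmod z1)^2 = (norm r1)^2" using z unfolding z1_def by (simp add: norm3 cmod_power2)
  have cz2: "(cmod z2)^2 = (norm r2)^2" using z unfolding z2_def by (simp add: norm3 cmod_power2)
  have zk: "cmod z1 \<le> k" "cmod z2 \<le> k"
    using cz1 cz2 k2 k0 unfolding M_def
    by (auto intro!: power2_le_imp_le simp: max_def split: if_splits)
  have split: "\<exists>u u'. cmod u = 1 \<and> cmod u' = 1 \<and> of_real (s*q) * (u + u') = zz/2"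
    if zzk: "cmod zz \<le> k" for zz
  proof (cases "k = 0")
    case True
    then have "zz = 0" using zzk by simp
    then show ?thesis using True unfolding k_def
      by (intro exI[of _ 1] exI[of _ "-1"]) simp
  next
    case False
    then have kp: "k > 0" using k0 by simp
    have "cmod (zz / of_real k) \<le> 1" using zzk kp by (simp add: norm_divide divide_le_eq)
    then obtain u u' where u: "cmod u = 1" "cmod u' = 1" "u + u' = 2 * (zz / of_real k)"
      using unit_split by blast
    have "of_real (s*q) * (u + u') = zz/2"
    proof -
      have "s \<noteq> 0" "q \<noteq> 0" using kp unfolding k_def by auto
      then show ?thesis unfolding u(3) k_def by (simp add: field_simps)
    qed
    then show ?thesis using u by blast
  qed
  obtain u1 u1' where u1: "cmod u1 = 1" "cmod u1' = 1" "of_real (s*q) * (u1 + u1') = z1/2"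
    using split[OF zk(1)] by blast
  obtain u2 u2' where u2: "cmod u2 = 1" "cmod u2' = 1" "of_real (s*q) * (u2 + u2') = z2/2"
    using split[OF zk(2)] by blast
  note props = PP_props[OF u1(1) u2(1) u1(2) u2(2) sq]
  have cj1: "of_real (s*q) * (cnj u1 + cnj u1') = cnj z1 / 2"
    using arg_cong[OF u1(3), of cnj] by simp
  have cj2: "of_real (s*q) * (cnj u2 + cnj u2') = cnj z2 / 2"
    using arg_cong[OF u2(3), of cnj] by simp
  let ?P = "PP s q u1 u2 u1' u2'"
  have "?P \<in> couplings (bloch r1) (bloch r2)"
    unfolding couplings_def
  proof (intro CollectI conjI)
    show "is_state ?P" by (rule props(1))
    show "ptrace_dual ?P = bloch r2"
      unfolding props(2) vec_eq_iff forall_2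
      using z cj2 u2(3) unfolding z2_def by (simp add: bloch_entries)
    show "ptrace_H ?P = transpose (bloch r1)"
      unfolding props(3) vec_eq_iff forall_2
      using z cj1 u1(3) unfolding z1_def by (simp add: bloch_entries transpose_def)
  qed
  moreover have "Re (trace (?P ** Cz p)) = 2 powr (p-1) * (1 - sqrt (1 - M))"
    unfolding props(4) q2 r_def[symmetric] t_def by (simp add: powr_diff)
  ultimately show ?thesis unfolding M_def by blast
qed



lemma Dz_formula:
  fixes r1 r2 :: "real^3"
  assumes z: "r1$3 = 0" "r2$3 = 0" and nr: "norm r1 \<le> 1" "norm r2 \<le> 1" and p: "p \<ge> 1"
  shows "Dz p (bloch r1) (bloch r2) powr p = 2 powr (p-1) * (1 - sqrt (1 - max ((norm r1)\<^sup>2) ((norm r2)\<^sup>2)))"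
proof -
  define L where "L = 2 powr (p-1) * (1 - sqrt (1 - max ((norm r1)\<^sup>2) ((norm r2)\<^sup>2)))"
  define S where "S = {Re (trace (P ** Cz p)) | P. P \<in> couplings (bloch r1) (bloch r2)}"
  obtain P where P: "P \<in> couplings (bloch r1) (bloch r2)" "Re (trace (P ** Cz p)) = L"
    using upper[OF z nr, of p] unfolding L_def by blast
  have "L \<in> S" unfolding S_def using P by blast
  moreover have "\<And>x. x \<in> S \<Longrightarrow> L \<le> x" unfolding S_def L_def using lower[OF z nr] by blast
  ultimately have inf: "Inf S = L" by (rule cInf_eq_minimum)
  have "max ((norm r1)\<^sup>2) ((norm r2)\<^sup>2) \<ge> 0" by (simp add: le_max_iff_disj)
  then have "sqrt (1 - max ((norm r1)\<^sup>2) ((norm r2)\<^sup>2)) \<le> 1" by simp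
  then have L0: "L \<ge> 0" unfolding L_def by simp
  have "Dz p (bloch r1) (bloch r2) = L powr (1/p)" unfolding Dz_def S_def[symmetric] inf ..
  then have "Dz p (bloch r1) (bloch r2) powr p = L powr (1/p * p)" by (simp add: powr_powr)
  also have "\<dots> = L" using p L0 by (simp add: powr_one)
  finally show ?thesis unfolding L_def .
qed

theorem theorem3p6:
  fixes r1 r2 :: "real^3" and p :: real
  assumes "norm r1 \<le> 1" and "norm r2 \<le> 1"
    and "r1 \<bullet> vector [0, 0, 1] = 0" and "r2 \<bullet> vector [0, 0, 1] = 0"
    and "p \<ge> 1"
  shows "Dz p (bloch r1) (bloch r2) powr p
           = 2 powr (p - 1) * (1 - sqrt (1 - max ((norm r1)\<^sup>2) ((norm r2)\<^sup>2)))
         \<and> (norm r1 \<ge> norm r2 \<longrightarrow>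
           (Dz p (bloch r1) (bloch r2) powr p = Dz p (bloch r2) (bloch r1) powr p \<and>
           Dz p (bloch r2) (bloch r1) powr p = Dz p (bloch r1) (bloch r1) powr p))"
proof -
  have z: "r1$3 = 0" "r2$3 = 0" using assms(3,4) by (simp_all add: inner3)
  note f12 = Dz_formula[OF z(1) z(2) assms(1) assms(2) assms(5)]
  note f21 = Dz_formula[OF z(2) z(1) assms(2) assms(1) assms(5)]
  note f11 = Dz_formula[OF z(1) z(1) assms(1) assms(1) assms(5)]
  have "norm r2 \<le> norm r1 \<Longrightarrow> (norm r2)\<^sup>2 \<le> (norm r1)\<^sup>2" by (simp add: power_mono)
  then show ?thesis using f12 f21 f11 by (auto simp: max_def)
qed

end
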